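(* Under the hypotheses of the average consensus error bound (SGP with Assumptions (1)–(4), the almost-sure bound $\|\bar{x}^{(t)}-z_i^{(t)}\|\le Cq^tX_0+\eta C\sum_{s=0}^tq^{t-s}\max_j\|g_j(z_j^{(s)};\xi_j^{(s)})\|$ for all $t\ge0$ and $i$ with $X_0=\max_m\|x_m^{(0)}\|$, and $P:=1-\frac{9\eta^2C^2L^2n}{(1-q)^2}>0$), assume moreover $0<\eta\le1/L$ and that for a given $T\ge1$ the cumulative inequality $$\frac{\eta}{2}\sum_{t=0}^{T-1}\mathbb{E}\|\nabla f(\bar{x}^{(t)})\|^2+\frac{\eta-L\eta^2}{2}\sum_{t=0}^{T-1}\mathbb{E}\Big\|\frac1n\sum_{i=1}^n\nabla f_i(z_i^{(t)})\Big\|^2\le f(\bar{x}^{(0)})-f^*+\frac{L\eta^2\sigma^2}{2n}T+\frac{\eta L^2}{2}\sum_{t=0}^{T-1}M^{(t)}$$ holds, where $M^{(t)}=\frac1n\sum_i\mathbb{E}\|\bar{x}^{(t)}-z_i^{(t)}\|^2$. Then $$\Big(1-\frac{9\eta^2L^2C^2}{P(1-q)^2}\Big)\sum_{t=0}^{T-1}\mathbb{E}\|\nabla f(\bar{x}^{(t)})\|^2\le\frac{2(f(\bar{x}^{(0)})-f^* )}{\eta}+\frac{L\eta\sigma^2T}{n}+\frac{3L^2C^2X_0^2}{P(1-q)^2}+\frac{3\eta^2L^2C^2n\sigma^2T}{P(1-q)^2}+\frac{9\eta^2L^2C^2n\zeta^2T}{P(1-q)^2}.$$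
   Context: Setting (SGP). Nodes $V=\{1,\dots,n\}$, $n\ge2$, base topology $G=(V,E)$ bidirected with self-loops; local objectives $f_i$, $f=\frac1n\sum_i f_i$, $f^*$ the finite optimal value of $f$; stochastic gradients $g_i(x;\xi)$ with fresh independent minibatches. SGP with nonnegative column-stochastic mixing matrices $W^{(t)}$ ($W^{(t)}_{ij}\ne0$ only if $(j,i)\in E$): $x_i^{(t+1)}=\sum_j W^{(t)}_{ij}(x_j^{(t)}-\eta g_j(z_j^{(t)};\xi_j^{(t)}))$, $w_i^{(t+1)}=\sum_jW^{(t)}_{ij}w_j^{(t)}$, $w_i^{(0)}=1$, $z_i^{(t)}=x_i^{(t)}/w_i^{(t)}$, $\bar{x}^{(t)}=\frac1n\sum_ix_i^{(t)}$. $E^{(t)}=\{(j,i)\in E:W^{(t)}_{ij}\ne0\}$, $\delta=\min_t\min_{W^{(t)}_{ij}>0}W^{(t)}_{ij}$. Assumptions: (1) each $f_i$ is $L$-smooth; (2) $\mathbb{E}\|g_i(x;\xi)-\nabla f_i(x)\|^2\le\sigma^2$ for all $i,x$; (3) $\frac1n\sum_i\|\nabla f_i(x)-\nabla f(x)\|^2\le\zeta^2$ for all $x$; (4) positive integers $B,\Delta$ exist with $(V,\bigcup_{t=lB}^{(l+1)B-1}E^{(t)})$ strongly connected of diameter at most $\Delta$ for every $l\in\mathbb{N}$. Constants: $C=4/\delta^{\Delta B}$ and $q=(1-\delta^{\Delta B})^{1/(\Delta B)}\in(0,1)$. *)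

theory Defs
  imports "HOL-Probability.Probability"
begin

text \<open>Average over the nodes 0..n-1 (nodes are indexed by 0..n-1 instead of 1..n).\<close>
definition avg :: "nat \<Rightarrow> (nat \<Rightarrow> 'a::real_vector) \<Rightarrow> 'a" where
  "avg n v = (1 / real n) *\<^sub>R (\<Sum>i<n. v i)"

definition strongly_connected_diam_le :: "nat \<Rightarrow> (nat \<times> nat) set \<Rightarrow> nat \<Rightarrow> bool" where
  "strongly_connected_diam_le n Es Delta \<longleftrightarrow>
     (\<forall>i<n. \<forall>j<n. \<exists>k\<le>Delta. (i, j) \<in> Es ^^ k)"

definition active_edges :: "(nat \<times> nat) set \<Rightarrow> (nat \<Rightarrow> nat \<Rightarrow> nat \<Rightarrow> real) \<Rightarrow> nat \<Rightarrow> (nat \<times> nat) set" where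
  "active_edges Eg W t = {(j, i). (j, i) \<in> Eg \<and> W t i j \<noteq> 0}"

end

theory Submission
  imports Defs
begin

lemma indep_noise:
  fixes xi :: "nat \<Rightarrow> nat \<Rightarrow> 'w \<Rightarrow> 'c"
    and Phi :: "(nat \<times> nat \<Rightarrow> 'c) \<Rightarrow> 'a"
    and h :: "'a \<times> 'c \<Rightarrow> ennreal"
  assumes M_prob: "prob_space M"
    and D_prob: "\<forall>i<n. prob_space (D i)"
    and xi_meas: "\<forall>t. \<forall>i<n. xi t i \<in> measurable M (D i)"
    and xi_distr: "\<forall>t. \<forall>i<n. distr M (D i) (xi t i) = D i"
    and xi_indep: "prob_space.indep_vars M (\<lambda>p. D (snd p)) (\<lambda>p. xi (fst p) (snd p))
                     (UNIV \<times> {..<n})"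
    and j: "j < n"
    and Phi: "Phi \<in> measurable (PiM ({..<s}\<times>{..<n}) (\<lambda>p. D (snd p))) Ma"
    and h: "h \<in> borel_measurable (Ma \<Otimes>\<^sub>M D j)"
    and bnd: "\<And>y. y \<in> space Ma \<Longrightarrow> (\<integral>\<^sup>+ c. h (y, c) \<partial>D j) \<le> b"
  shows "(\<integral>\<^sup>+ \<omega>. h (Phi (restrict (\<lambda>p. xi (fst p) (snd p) \<omega>) ({..<s}\<times>{..<n})), xi s j \<omega>) \<partial>M) \<le> b"
proof -
  interpret prob_space M by fact
  define N where "N = (\<lambda>p::nat\<times>nat. D (snd p))"
  define K where "K = {..<s}\<times>{..<n}"
  define Y where "Y = (\<lambda>\<omega>. restrict (\<lambda>p. xi (fst p) (snd p) \<omega>) K)"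
  define Y2 where "Y2 = (\<lambda>\<omega>. restrict (\<lambda>p. xi (fst p) (snd p) \<omega>) {(s,j)})"
  have "indep_vars (\<lambda>b. PiM (case_bool K {(s,j)} b) N)
     (\<lambda>b \<omega>. restrict (\<lambda>i. xi (fst i) (snd i) \<omega>) (case_bool K {(s,j)} b)) UNIV"
    apply (rule indep_vars_restrict[OF xi_indep[folded N_def]])
    using j by (auto simp: K_def disjoint_family_on_def split: bool.split)
  moreover have "(\<lambda>b. PiM (case_bool K {(s,j)} b) N) = case_bool (PiM K N) (PiM {(s,j)} N)"
    by (auto split: bool.split)
  moreover have "(\<lambda>b \<omega>. restrict (\<lambda>i. xi (fst i) (snd i) \<omega>) (case_bool K {(s,j)} b)) = case_bool Y Y2"
    by (auto simp: Y_def Y2_def split: bool.split)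
  ultimately have ind: "indep_var (PiM K N) Y (PiM {(s,j)} N) Y2"
    unfolding indep_var_def by simp
  have ev: "(\<lambda>f. f (s,j)) \<in> measurable (PiM {(s,j)} N) (D j)"
    using measurable_component_singleton[of "(s,j)" "{(s,j)}" N] by (simp add: N_def)
  have dist: "distr M (PiM K N) Y \<Otimes>\<^sub>M distr M (PiM {(s,j)} N) Y2
      = distr M (PiM K N \<Otimes>\<^sub>M PiM {(s,j)} N) (\<lambda>x. (Y x, Y2 x))"
    using ind[unfolded indep_var_distribution_eq] by auto
  have Ym: "Y \<in> measurable M (PiM K N)"
    using ind by (simp add: indep_var_rv1)
  have Y2m: "Y2 \<in> measurable M (PiM {(s,j)} N)"
    using ind by (simp add: indep_var_rv2)
  have xm: "xi s j \<in> measurable M (D j)" using xi_meas j by auto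
  have eq2: "\<And>\<omega>. Y2 \<omega> (s,j) = xi s j \<omega>" by (auto simp: Y2_def)
  interpret Dj: prob_space "D j" using D_prob j by auto
  interpret DY: prob_space "distr M (PiM K N) Y" using Ym by (rule prob_space_distr)
  interpret DY2: prob_space "distr M (PiM {(s,j)} N) Y2" using Y2m by (rule prob_space_distr)
  have hm: "(\<lambda>p. h (Phi (fst p), snd p (s,j))) \<in> borel_measurable (PiM K N \<Otimes>\<^sub>M PiM {(s,j)} N)"
    using Phi h ev unfolding K_def N_def by measurable
  have "(\<integral>\<^sup>+ \<omega>. h (Phi (Y \<omega>), xi s j \<omega>) \<partial>M)
     = (\<integral>\<^sup>+ \<omega>. h (Phi (fst (Y \<omega>, Y2 \<omega>)), snd (Y \<omega>, Y2 \<omega>) (s,j)) \<partial>M)"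
    by (simp add: eq2)
  also have "\<dots> = (\<integral>\<^sup>+ p. h (Phi (fst p), snd p (s,j)) \<partial>distr M (PiM K N \<Otimes>\<^sub>M PiM {(s,j)} N) (\<lambda>x. (Y x, Y2 x)))"
    by (subst nn_integral_distr) (use Ym Y2m hm in auto)
  also have "\<dots> = (\<integral>\<^sup>+ p. h (Phi (fst p), snd p (s,j)) \<partial>(distr M (PiM K N) Y \<Otimes>\<^sub>M distr M (PiM {(s,j)} N) Y2))"
    by (simp add: dist)
  also have "\<dots> = (\<integral>\<^sup>+ a. \<integral>\<^sup>+ f. h (Phi a, f (s,j)) \<partial>distr M (PiM {(s,j)} N) Y2 \<partial>distr M (PiM K N) Y)"
    apply (subst DY2.nn_integral_fst[symmetric])
    using hm by (auto cong: measurable_cong_sets)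
  also have "\<dots> = (\<integral>\<^sup>+ a. \<integral>\<^sup>+ c. h (Phi a, c) \<partial>D j \<partial>distr M (PiM K N) Y)"
  proof (rule nn_integral_cong)
    fix a assume a: "a \<in> space (distr M (PiM K N) Y)"
    have am: "Phi a \<in> space Ma" using Phi a by (auto simp: K_def N_def measurable_space)
    have hc: "(\<lambda>c. h (Phi a, c)) \<in> borel_measurable (D j)"
      using h am by measurable
    have "(\<integral>\<^sup>+ f. h (Phi a, f (s,j)) \<partial>distr M (PiM {(s,j)} N) Y2) = (\<integral>\<^sup>+ \<omega>. h (Phi a, Y2 \<omega> (s,j)) \<partial>M)"
      by (subst nn_integral_distr) (use Y2m hc ev in auto)
    also have "\<dots> = (\<integral>\<^sup>+ \<omega>. h (Phi a, xi s j \<omega>) \<partial>M)" by (simp add: eq2)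
    also have "\<dots> = (\<integral>\<^sup>+ c. h (Phi a, c) \<partial>distr M (D j) (xi s j))"
      by (subst nn_integral_distr) (use xm hc in auto)
    also have "\<dots> = (\<integral>\<^sup>+ c. h (Phi a, c) \<partial>D j)" using xi_distr j by simp
    finally show "(\<integral>\<^sup>+ f. h (Phi a, f (s,j)) \<partial>distr M (PiM {(s,j)} N) Y2) = (\<integral>\<^sup>+ c. h (Phi a, c) \<partial>D j)" .
  qed
  also have "\<dots> \<le> (\<integral>\<^sup>+ a. b \<partial>distr M (PiM K N) Y)"
    apply (rule nn_integral_mono)
    apply (rule bnd)
    using Phi by (auto simp: K_def N_def measurable_space)
  also have "\<dots> = b" using DY.emeasure_space_1 by simp
  finally show ?thesis by (simp add: Y_def K_def)
qed

fun Xr :: "nat \<Rightarrow> (nat\<Rightarrow>nat\<Rightarrow>nat\<Rightarrow>real) \<Rightarrow> (nat\<Rightarrow>nat\<Rightarrow>real) \<Rightarrow> real \<Rightarrow> (nat \<Rightarrow> 'a::real_vector \<Rightarrow> 'c \<Rightarrow> 'a)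
   \<Rightarrow> (nat \<Rightarrow> 'a) \<Rightarrow> nat \<Rightarrow> nat \<Rightarrow> (nat\<times>nat \<Rightarrow> 'c) \<Rightarrow> 'a" where
  "Xr n W w eta g x0 0 i c = x0 i"
| "Xr n W w eta g x0 (Suc t) i c = (\<Sum>j<n. W t i j *\<^sub>R (Xr n W w eta g x0 t j c
      - eta *\<^sub>R g j (inverse (w t j) *\<^sub>R Xr n W w eta g x0 t j c) (c (t,j))))"

lemma Xr_local:
  "(\<forall>p\<in>{..<t}\<times>{..<n}. c p = c' p) \<Longrightarrow> Xr n W w eta g x0 t i c = Xr n W w eta g x0 t i c'"
proof (induction t arbitrary: i)
  case 0 then show ?case by simp
next
  case (Suc t)
  have "\<forall>p\<in>{..<t}\<times>{..<n}. c p = c' p" using Suc.prems by auto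
  then have IH: "\<And>j. Xr n W w eta g x0 t j c = Xr n W w eta g x0 t j c'" using Suc.IH by blast
  have "\<And>j. j < n \<Longrightarrow> c (t,j) = c' (t,j)" using Suc.prems by auto
  then show ?case by (simp add: IH)
qed

lemma Xr_meas:
  fixes g :: "nat \<Rightarrow> 'a::euclidean_space \<Rightarrow> 'c \<Rightarrow> 'a"
  assumes g_meas: "\<forall>i<n. (\<lambda>p. g i (fst p) (snd p)) \<in> borel_measurable (borel \<Otimes>\<^sub>M D i)"
  shows "{..<t}\<times>{..<n} \<subseteq> K \<Longrightarrow> Xr n W w eta g x0 t i \<in> borel_measurable (PiM K (\<lambda>p. D (snd p)))"
proof (induction t arbitrary: i)
  case 0 then show ?case by simp
next
  case (Suc t)
  have IH: "\<And>j. Xr n W w eta g x0 t j \<in> borel_measurable (PiM K (\<lambda>p. D (snd p)))"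
  proof -
    have "{..<t}\<times>{..<n} \<subseteq> K" using Suc.prems by (auto simp: subset_iff)
    then show "\<And>j. Xr n W w eta g x0 t j \<in> borel_measurable (PiM K (\<lambda>p. D (snd p)))" using Suc.IH by blast
  qed
  have "\<And>j. j < n \<Longrightarrow> (\<lambda>c. g j (inverse (w t j) *\<^sub>R Xr n W w eta g x0 t j c) (c (t,j)))
           \<in> borel_measurable (PiM K (\<lambda>p. D (snd p)))"
  proof -
    fix j assume j: "j < n"
    have ev: "(\<lambda>c. c (t,j)) \<in> measurable (PiM K (\<lambda>p. D (snd p))) (D j)"
      using measurable_component_singleton[of "(t,j)" K "\<lambda>p. D (snd p)"] Suc.prems j by auto
    have pm: "(\<lambda>c. (inverse (w t j) *\<^sub>R Xr n W w eta g x0 t j c, c (t,j))) \<in> measurable (PiM K (\<lambda>p. D (snd p))) (borel \<Otimes>\<^sub>M D j)"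
      using IH ev by measurable
    have "(\<lambda>p. g j (fst p) (snd p)) \<circ> (\<lambda>c. (inverse (w t j) *\<^sub>R Xr n W w eta g x0 t j c, c (t,j)))
        \<in> borel_measurable (PiM K (\<lambda>p. D (snd p)))"
      using measurable_comp[OF pm] g_meas j by blast
    then show "(\<lambda>c. g j (inverse (w t j) *\<^sub>R Xr n W w eta g x0 t j c) (c (t,j)))
           \<in> borel_measurable (PiM K (\<lambda>p. D (snd p)))" by (simp add: o_def)
  qed
  then show ?case using IH by (simp del: Xr.simps add: Xr.simps(2)) measurable
qed

lemma four_sq:
  fixes a b c d :: real
  shows "(a+b+c+d)\<^sup>2 \<le> 2*a\<^sup>2 + 6*b\<^sup>2 + 6*c\<^sup>2 + 6*d\<^sup>2"
proof -
  have "2*a\<^sup>2 + 6*b\<^sup>2 + 6*c\<^sup>2 + 6*d\<^sup>2 - (a+b+c+d)\<^sup>2 = (a-b-c-d)\<^sup>2 + 2*((b-c)\<^sup>2+(b-d)\<^sup>2+(c-d)\<^sup>2)"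
    by (simp add: power2_eq_square algebra_simps)
  moreover have "0 \<le> (a-b-c-d)\<^sup>2 + 2*((b-c)\<^sup>2+(b-d)\<^sup>2+(c-d)\<^sup>2)" by simp
  ultimately show ?thesis by linarith
qed

lemma two_sq:
  fixes e a b :: real
  assumes "0 \<le> e" "e \<le> a + b"
  shows "e\<^sup>2 \<le> 3*a\<^sup>2 + 3/2*b\<^sup>2"
proof -
  have "e\<^sup>2 \<le> (a+b)\<^sup>2" using assms by (simp add: power_mono)
  moreover have "3*a\<^sup>2 + 3/2*b\<^sup>2 - (a+b)\<^sup>2 = (sqrt 2 * a - b / sqrt 2)\<^sup>2"
    by (simp add: power2_eq_square algebra_simps)
  moreover have "0 \<le> (sqrt 2 * a - b / sqrt 2)\<^sup>2" by simp
  ultimately show ?thesis by linarith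
qed

lemma wcs:
  fixes w G :: "nat \<Rightarrow> real"
  assumes "\<And>s. s \<in> A \<Longrightarrow> 0 \<le> w s"
  shows "(\<Sum>s\<in>A. w s * G s)\<^sup>2 \<le> (\<Sum>s\<in>A. w s) * (\<Sum>s\<in>A. w s * (G s)\<^sup>2)"
proof -
  have "(\<Sum>s\<in>A. w s * G s) = (\<Sum>s\<in>A. sqrt (w s) * (sqrt (w s) * G s))"
    by (rule sum.cong) (use assms in \<open>auto simp: real_sqrt_mult[symmetric]\<close>)
  also have "(\<dots>)\<^sup>2 \<le> (\<Sum>s\<in>A. (sqrt (w s))\<^sup>2) * (\<Sum>s\<in>A. (sqrt (w s) * G s)\<^sup>2)"
    by (rule Cauchy_Schwarz_ineq_sum)
  also have "\<dots> = (\<Sum>s\<in>A. w s) * (\<Sum>s\<in>A. w s * (G s)\<^sup>2)"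
    using assms by (simp add: power_mult_distrib)
  finally show ?thesis .
qed

lemma geo_le:
  fixes q :: real assumes "0 \<le> q" "q < 1"
  shows "(\<Sum>k<m. q^k) \<le> 1/(1-q)"
proof -
  have "(\<Sum>k<m. q^k) = (1 - q^m)/(1-q)" using assms by (simp add: sum_gp_strict)
  also have "\<dots> \<le> 1/(1-q)" using assms by (simp add: divide_right_mono)
  finally show ?thesis .
qed

lemma shift_sum:
  fixes q :: real
  shows "(\<Sum>t<T. if s \<le> t then q^(t-s) else 0) = (\<Sum>k<T-s. q^k)"
proof (induction T)
  case 0 then show ?case by simp
next
  case (Suc T)
  show ?case
  proof (cases "s \<le> T")
    case True
    then have "Suc T - s = Suc (T - s)" by simp
    then show ?thesis using Suc True by simp
  next
    case False
    then have "Suc T - s = 0" "T - s = 0" by auto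
    then show ?thesis using Suc False by simp
  qed
qed

lemma tri_sum:
  fixes q :: real and H :: "nat \<Rightarrow> real"
  assumes "0 \<le> q" "q < 1" "\<And>s. 0 \<le> H s"
  shows "(\<Sum>t<T. \<Sum>s\<le>t. q^(t-s) * H s) \<le> 1/(1-q) * (\<Sum>s<T. H s)"
proof -
  have "(\<Sum>t<T. \<Sum>s\<le>t. q^(t-s) * H s) = (\<Sum>t<T. \<Sum>s<T. (if s \<le> t then q^(t-s) else 0) * H s)"
  proof (rule sum.cong[OF refl])
    fix t assume t: "t \<in> {..<T}"
    have "(\<Sum>s<T. (if s \<le> t then q^(t-s) else 0) * H s) = (\<Sum>s\<in>{..<T} \<inter> {s. s \<le> t}. q^(t-s) * H s)"
      by (simp add: sum.inter_restrict) (rule sum.cong, auto)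
    also have "{..<T} \<inter> {s. s \<le> t} = {..t}" using t by auto
    finally show "(\<Sum>s\<le>t. q^(t-s) * H s) = (\<Sum>s<T. (if s \<le> t then q^(t-s) else 0) * H s)" by simp
  qed
  also have "\<dots> = (\<Sum>s<T. (\<Sum>t<T. if s \<le> t then q^(t-s) else 0) * H s)"
    by (subst sum.swap) (simp add: sum_distrib_right)
  also have "\<dots> \<le> (\<Sum>s<T. 1/(1-q) * H s)"
    apply (rule sum_mono)
    apply (rule mult_right_mono)
    using assms by (auto simp: shift_sum geo_le)
  finally show ?thesis by (simp add: sum_distrib_left)
qed

lemma rev_geo: fixes q :: real shows "(\<Sum>s\<le>t. q^(t-s)) = (\<Sum>k<Suc t. q^k)"
proof (induction t)
  case 0 then show ?case by simp
next
  case (Suc t)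
  have "(\<Sum>s\<le>Suc t. q^(Suc t-s)) = (\<Sum>s\<le>t. q^(Suc t-s)) + 1" by simp
  also have "(\<Sum>s\<le>t. q^(Suc t-s)) = q * (\<Sum>s\<le>t. q^(t-s))"
    by (simp add: sum_distrib_left Suc_diff_le power_Suc del: power_Suc2)
  also have "q * (\<Sum>s\<le>t. q^(t-s)) + 1 = (\<Sum>k<Suc (Suc t). q^k)"
    using Suc by (simp only: sum.lessThan_Suc_shift) (simp add: sum_distrib_left distrib_left del: sum.lessThan_Suc)
  finally show ?case .
qed

lemma pointwise:
  fixes e :: "nat \<Rightarrow> nat \<Rightarrow> real" and G H :: "nat \<Rightarrow> real"
  assumes q0: "0 \<le> q" and q1: "q < 1" and C0: "0 \<le> C" and X0: "0 \<le> X0" and eta0: "0 \<le> eta"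
    and e0: "\<And>t i. i < n \<Longrightarrow> 0 \<le> e t i"
    and eb: "\<And>t i. t < T \<Longrightarrow> i < n \<Longrightarrow> e t i \<le> C*q^t*X0 + eta*C*(\<Sum>s\<le>t. q^(t-s) * G s)"
    and G0: "\<And>s. 0 \<le> G s" and GH: "\<And>s. (G s)\<^sup>2 \<le> H s"
  shows "(\<Sum>t<T. \<Sum>i<n. (e t i)\<^sup>2) \<le> real n * (3*C\<^sup>2*X0\<^sup>2/(1-q)\<^sup>2) + real n * (3/2*eta\<^sup>2*C\<^sup>2/(1-q)\<^sup>2) * (\<Sum>s<T. H s)"
proof -
  have H0: "\<And>s. 0 \<le> H s" using GH by (meson order_trans zero_le_power2)
  have bq: "\<And>t. (eta*C*(\<Sum>s\<le>t. q^(t-s) * G s))\<^sup>2 \<le> eta\<^sup>2*C\<^sup>2/(1-q) * (\<Sum>s\<le>t. q^(t-s) * H s)"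
  proof -
    fix t
    have "(\<Sum>s\<le>t. q^(t-s) * G s)\<^sup>2 \<le> (\<Sum>s\<le>t. q^(t-s)) * (\<Sum>s\<le>t. q^(t-s) * (G s)\<^sup>2)"
      by (rule wcs) (use q0 in auto)
    also have "\<dots> \<le> 1/(1-q) * (\<Sum>s\<le>t. q^(t-s) * H s)"
    proof (rule mult_mono)
      show "(\<Sum>s\<le>t. q^(t-s)) \<le> 1/(1-q)" unfolding rev_geo using geo_le q0 q1 by blast
      show "(\<Sum>s\<le>t. q^(t-s) * (G s)\<^sup>2) \<le> (\<Sum>s\<le>t. q^(t-s) * H s)"
        by (rule sum_mono, rule mult_left_mono) (use GH q0 in auto)
      show "0 \<le> 1/(1-q)" using q1 by simp
      show "0 \<le> (\<Sum>s\<le>t. q^(t-s) * (G s)\<^sup>2)" using q0 by (auto intro: sum_nonneg)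
    qed
    finally have "(\<Sum>s\<le>t. q^(t-s) * G s)\<^sup>2 \<le> 1/(1-q) * (\<Sum>s\<le>t. q^(t-s) * H s)" .
    then have "(eta*C)\<^sup>2 * (\<Sum>s\<le>t. q^(t-s) * G s)\<^sup>2 \<le> (eta*C)\<^sup>2 * (1/(1-q) * (\<Sum>s\<le>t. q^(t-s) * H s))"
      by (rule mult_left_mono) simp
    then show "(eta*C*(\<Sum>s\<le>t. q^(t-s) * G s))\<^sup>2 \<le> eta\<^sup>2*C\<^sup>2/(1-q) * (\<Sum>s\<le>t. q^(t-s) * H s)"
      by (simp add: power_mult_distrib)
  qed
  have pt: "\<And>t i. t < T \<Longrightarrow> i < n \<Longrightarrow> (e t i)\<^sup>2 \<le> 3*C\<^sup>2*X0\<^sup>2*q^t + 3/2*(eta\<^sup>2*C\<^sup>2/(1-q) * (\<Sum>s\<le>t. q^(t-s) * H s))"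
  proof -
    fix t i assume t: "t < T" and i: "i < n"
    have h1: "(e t i)\<^sup>2 \<le> 3*(C*q^t*X0)\<^sup>2 + 3/2*(eta*C*(\<Sum>s\<le>t. q^(t-s) * G s))\<^sup>2"
      by (rule two_sq[OF e0[OF i] eb[OF t i]])
    have h2: "(C*q^t*X0)\<^sup>2 \<le> C\<^sup>2*X0\<^sup>2*q^t"
    proof -
      have "(q^t)\<^sup>2 \<le> q^t" using q0 q1 by (simp add: power2_eq_square mult_left_le_one_le power_le_one)
      then have "C\<^sup>2*X0\<^sup>2*(q^t)\<^sup>2 \<le> C\<^sup>2*X0\<^sup>2*q^t" by (simp add: mult_left_mono)
      then show ?thesis by (simp add: power_mult_distrib algebra_simps)
    qed
    show "(e t i)\<^sup>2 \<le> 3*C\<^sup>2*X0\<^sup>2*q^t + 3/2*(eta\<^sup>2*C\<^sup>2/(1-q) * (\<Sum>s\<le>t. q^(t-s) * H s))"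
    proof -
      have h3: "3*(C*q^t*X0)\<^sup>2 \<le> 3*(C\<^sup>2*X0\<^sup>2*q^t)" using h2 by simp
      have h4: "3/2*(eta*C*(\<Sum>s\<le>t. q^(t-s) * G s))\<^sup>2 \<le> 3/2*(eta\<^sup>2*C\<^sup>2/(1-q) * (\<Sum>s\<le>t. q^(t-s) * H s))"
        using mult_left_mono[OF bq[of t], of "3/2"] by simp
      have "(e t i)\<^sup>2 \<le> 3*(C\<^sup>2*X0\<^sup>2*q^t) + 3/2*(eta\<^sup>2*C\<^sup>2/(1-q) * (\<Sum>s\<le>t. q^(t-s) * H s))"
        using h1 h3 h4 by linarith
      then show ?thesis by (simp only: mult.assoc)
    qed
  qed
  have "(\<Sum>t<T. \<Sum>i<n. (e t i)\<^sup>2) \<le> (\<Sum>t<T. \<Sum>i<n. 3*C\<^sup>2*X0\<^sup>2*q^t + 3/2*(eta\<^sup>2*C\<^sup>2/(1-q) * (\<Sum>s\<le>t. q^(t-s) * H s)))"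
    by (intro sum_mono pt) auto
  also have "\<dots> = real n * (3*C\<^sup>2*X0\<^sup>2 * (\<Sum>t<T. q^t)) + real n * (3/2*(eta\<^sup>2*C\<^sup>2/(1-q))) * (\<Sum>t<T. \<Sum>s\<le>t. q^(t-s) * H s)"
  proof -
    have "(\<Sum>t<T. \<Sum>i<n. 3*C\<^sup>2*X0\<^sup>2*q^t + 3/2*(eta\<^sup>2*C\<^sup>2/(1-q) * (\<Sum>s\<le>t. q^(t-s) * H s)))
        = (\<Sum>t<T. real n * (3*C\<^sup>2*X0\<^sup>2) * q^t + real n * (3/2*(eta\<^sup>2*C\<^sup>2/(1-q))) * (\<Sum>s\<le>t. q^(t-s) * H s))"
      by (simp add: algebra_simps)
    also have "\<dots> = real n * (3*C\<^sup>2*X0\<^sup>2) * (\<Sum>t<T. q^t) + real n * (3/2*(eta\<^sup>2*C\<^sup>2/(1-q))) * (\<Sum>t<T. \<Sum>s\<le>t. q^(t-s) * H s)"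
      by (simp only: sum.distrib sum_distrib_left)
    finally show ?thesis by simp
  qed
  also have "\<dots> \<le> real n * (3*C\<^sup>2*X0\<^sup>2/(1-q)\<^sup>2) + real n * (3/2*(eta\<^sup>2*C\<^sup>2/(1-q))) * (1/(1-q) * (\<Sum>s<T. H s))"
  proof (rule add_mono)
    have "(\<Sum>t<T. q^t) \<le> 1/(1-q)" by (rule geo_le[OF q0 q1])
    also have "1/(1-q) \<le> 1/(1-q)\<^sup>2" using q0 q1
      by (simp add: divide_simps power2_eq_square)
    finally have fin: "3*C\<^sup>2*X0\<^sup>2 * (\<Sum>t<T. q^t) \<le> 3*C\<^sup>2*X0\<^sup>2 * (1/(1-q)\<^sup>2)" by (rule mult_left_mono) simp
    show "real n * (3*C\<^sup>2*X0\<^sup>2 * (\<Sum>t<T. q^t)) \<le> real n * (3*C\<^sup>2*X0\<^sup>2/(1-q)\<^sup>2)"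
      using mult_left_mono[OF fin, of "real n"] by simp
    show "real n * (3/2*(eta\<^sup>2*C\<^sup>2/(1-q))) * (\<Sum>t<T. \<Sum>s\<le>t. q^(t-s) * H s) \<le> real n * (3/2*(eta\<^sup>2*C\<^sup>2/(1-q))) * (1/(1-q) * (\<Sum>s<T. H s))"
      by (rule mult_left_mono[OF tri_sum[OF q0 q1 H0]]) (use q1 in simp)
  qed
  also have "\<dots> = real n * (3*C\<^sup>2*X0\<^sup>2/(1-q)\<^sup>2) + real n * (3/2*eta\<^sup>2*C\<^sup>2/(1-q)\<^sup>2) * (\<Sum>s<T. H s)"
    using q1 by (simp add: power2_eq_square field_simps)
  finally show ?thesis .
qed

definition sqi :: "'w measure \<Rightarrow> ('w \<Rightarrow> 'a::euclidean_space) \<Rightarrow> bool" where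
  "sqi M f \<longleftrightarrow> f \<in> borel_measurable M \<and> integrable M (\<lambda>\<omega>. (norm (f \<omega>))\<^sup>2)"

lemma sq_add_le: fixes a b :: real shows "(a+b)\<^sup>2 \<le> 2*a\<^sup>2 + 2*b\<^sup>2"
proof -
  have "2*a\<^sup>2 + 2*b\<^sup>2 - (a+b)\<^sup>2 = (a-b)\<^sup>2" by (simp add: power2_eq_square algebra_simps)
  moreover have "0 \<le> (a-b)\<^sup>2" by simp
  ultimately show ?thesis by linarith
qed

lemma sqi_const: "finite_measure M \<Longrightarrow> sqi M (\<lambda>_. c)"
  unfolding sqi_def by (auto intro: finite_measure.integrable_const)

lemma sqi_add:
  assumes f: "sqi M f" and g: "sqi M g"
  shows "sqi M (\<lambda>\<omega>. f \<omega> + g \<omega>)"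
proof -
  have fm: "f \<in> borel_measurable M" and gm: "g \<in> borel_measurable M"
    and fi: "integrable M (\<lambda>\<omega>. (norm (f \<omega>))\<^sup>2)" and gi: "integrable M (\<lambda>\<omega>. (norm (g \<omega>))\<^sup>2)"
    using f g by (auto simp: sqi_def)
  have m: "(\<lambda>\<omega>. f \<omega> + g \<omega>) \<in> borel_measurable M" using fm gm by measurable
  have I: "integrable M (\<lambda>\<omega>. 2 * (norm (f \<omega>))\<^sup>2 + 2 * (norm (g \<omega>))\<^sup>2)"
    using fi gi by auto
  have ineq: "\<And>\<omega>. norm ((norm (f \<omega> + g \<omega>))\<^sup>2) \<le> norm (2 * (norm (f \<omega>))\<^sup>2 + 2 * (norm (g \<omega>))\<^sup>2)"
  proof -
    fix \<omega>
    have "norm (f \<omega> + g \<omega>) \<le> norm (f \<omega>) + norm (g \<omega>)" by (rule norm_triangle_ineq)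
    then have "(norm (f \<omega> + g \<omega>))\<^sup>2 \<le> (norm (f \<omega>) + norm (g \<omega>))\<^sup>2" by (simp add: power_mono)
    also have "\<dots> \<le> 2 * (norm (f \<omega>))\<^sup>2 + 2 * (norm (g \<omega>))\<^sup>2"
      by (rule sq_add_le)
    finally show "norm ((norm (f \<omega> + g \<omega>))\<^sup>2) \<le> norm (2 * (norm (f \<omega>))\<^sup>2 + 2 * (norm (g \<omega>))\<^sup>2)" by simp
  qed
  have "integrable M (\<lambda>\<omega>. (norm (f \<omega> + g \<omega>))\<^sup>2)"
  proof (rule Bochner_Integration.integrable_bound[OF I])
    show "(\<lambda>\<omega>. (norm (f \<omega> + g \<omega>))\<^sup>2) \<in> borel_measurable M" using m by measurable
  qed (rule AE_I2, rule ineq)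
  then show ?thesis using m by (simp add: sqi_def)
qed

lemma sqi_scale:
  assumes f: "sqi M f" shows "sqi M (\<lambda>\<omega>. c *\<^sub>R f \<omega>)"
proof -
  have fm: "f \<in> borel_measurable M" and fi: "integrable M (\<lambda>\<omega>. (norm (f \<omega>))\<^sup>2)"
    using f by (auto simp: sqi_def)
  have "integrable M (\<lambda>\<omega>. c\<^sup>2 * (norm (f \<omega>))\<^sup>2)" using fi by auto
  then have "integrable M (\<lambda>\<omega>. (norm (c *\<^sub>R f \<omega>))\<^sup>2)" by (simp add: power_mult_distrib)
  then show ?thesis using fm by (simp add: sqi_def)
qed

lemma sqi_diff:
  assumes f: "sqi M f" and g: "sqi M g"
  shows "sqi M (\<lambda>\<omega>. f \<omega> - g \<omega>)"
  using sqi_add[OF f sqi_scale[OF g, of "-1"]] by simp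

lemma sqi_sum:
  assumes "finite A" "\<And>j. j \<in> A \<Longrightarrow> sqi M (f j)" "finite_measure M"
  shows "sqi M (\<lambda>\<omega>. \<Sum>j\<in>A. f j \<omega>)"
  using assms
proof (induction A rule: finite_induct)
  case empty then show ?case using sqi_const[of M 0] by simp
next
  case (insert a A)
  then show ?case using sqi_add[of M "f a" "\<lambda>\<omega>. \<Sum>j\<in>A. f j \<omega>"] by simp
qed

lemma sqi_lip:
  fixes phi :: "'a::euclidean_space \<Rightarrow> 'b::euclidean_space"
  assumes f: "sqi M f" and fm: "finite_measure M" and pm: "phi \<in> borel_measurable borel"
    and L0: "0 \<le> L" and lip: "\<And>y y'. norm (phi y - phi y') \<le> L * norm (y - y')"
  shows "sqi M (\<lambda>\<omega>. phi (f \<omega>))"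
proof -
  have fme: "f \<in> borel_measurable M" and fi: "integrable M (\<lambda>\<omega>. (norm (f \<omega>))\<^sup>2)"
    using f by (auto simp: sqi_def)
  have m: "(\<lambda>\<omega>. phi (f \<omega>)) \<in> borel_measurable M" using fme pm by measurable
  have I: "integrable M (\<lambda>\<omega>. 2 * (norm (phi 0))\<^sup>2 + 2 * L\<^sup>2 * (norm (f \<omega>))\<^sup>2)"
    by (intro Bochner_Integration.integrable_add finite_measure.integrable_const[OF fm] integrable_mult_right fi)
  have ineq: "\<And>\<omega>. norm ((norm (phi (f \<omega>)))\<^sup>2) \<le> norm (2 * (norm (phi 0))\<^sup>2 + 2 * L\<^sup>2 * (norm (f \<omega>))\<^sup>2)"
  proof -
    fix \<omega>
    have "norm (phi (f \<omega>)) \<le> norm (phi 0) + norm (phi (f \<omega>) - phi 0)" by (metis norm_triangle_sub add.commute)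
    also have "norm (phi (f \<omega>) - phi 0) \<le> L * norm (f \<omega>)" using lip[of "f \<omega>" 0] by simp
    finally have "norm (phi (f \<omega>)) \<le> norm (phi 0) + L * norm (f \<omega>)" by simp
    then have "(norm (phi (f \<omega>)))\<^sup>2 \<le> (norm (phi 0) + L * norm (f \<omega>))\<^sup>2" by (simp add: power_mono)
    also have "\<dots> \<le> 2 * (norm (phi 0))\<^sup>2 + 2 * (L * norm (f \<omega>))\<^sup>2"
      by (rule sq_add_le)
    finally show "norm ((norm (phi (f \<omega>)))\<^sup>2) \<le> norm (2 * (norm (phi 0))\<^sup>2 + 2 * L\<^sup>2 * (norm (f \<omega>))\<^sup>2)"
      by (simp add: power_mult_distrib)
  qed
  have "integrable M (\<lambda>\<omega>. (norm (phi (f \<omega>)))\<^sup>2)"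
  proof (rule Bochner_Integration.integrable_bound[OF I])
    show "(\<lambda>\<omega>. (norm (phi (f \<omega>)))\<^sup>2) \<in> borel_measurable M" using m by measurable
  qed (rule AE_I2, rule ineq)
  then show ?thesis using m by (simp add: sqi_def)
qed

lemma sqi_nn:
  assumes fm: "f \<in> borel_measurable M" and b0: "0 \<le> b" and b: "(\<integral>\<^sup>+\<omega>. ennreal ((norm (f \<omega>))\<^sup>2) \<partial>M) \<le> ennreal b"
  shows "sqi M f" "(\<integral>\<omega>. (norm (f \<omega>))\<^sup>2 \<partial>M) \<le> b"
proof -
  have "(\<integral>\<^sup>+\<omega>. ennreal (norm ((norm (f \<omega>))\<^sup>2)) \<partial>M) < \<infinity>"
    using b by (simp add: le_less_trans)
  then have i: "integrable M (\<lambda>\<omega>. (norm (f \<omega>))\<^sup>2)"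
    by (intro integrableI_bounded) (use fm in auto)
  then show "sqi M f" using fm by (simp add: sqi_def)
  have "ennreal (\<integral>\<omega>. (norm (f \<omega>))\<^sup>2 \<partial>M) = (\<integral>\<^sup>+\<omega>. ennreal ((norm (f \<omega>))\<^sup>2) \<partial>M)"
    by (rule nn_integral_eq_integral[symmetric]) (use i in auto)
  with b have "ennreal (\<integral>\<omega>. (norm (f \<omega>))\<^sup>2 \<partial>M) \<le> ennreal b" by simp
  moreover have "0 \<le> (\<integral>\<omega>. (norm (f \<omega>))\<^sup>2 \<partial>M)" by simp
  ultimately show "(\<integral>\<omega>. (norm (f \<omega>))\<^sup>2 \<partial>M) \<le> b"
    using b0 by (simp add: ennreal_le_iff)
qed

lemma final_alg:
  fixes L eta q P C X0 sigma zeta S K Dl :: real and n T :: nat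
  assumes Pp: "0 < P" and q1: "q < 1" and eta0: "0 < eta" and n0: "0 < n"
    and PK: "P * K \<le> 3*C\<^sup>2*X0\<^sup>2/(1-q)\<^sup>2 + 3*(eta\<^sup>2*C\<^sup>2/(1-q)\<^sup>2)*n* sigma\<^sup>2*T
                 + 9*(eta\<^sup>2*C\<^sup>2/(1-q)\<^sup>2)*n*zeta\<^sup>2*T + 9*(eta\<^sup>2*C\<^sup>2/(1-q)\<^sup>2)*S"
    and SK: "S \<le> 2*Dl/eta + L*eta* sigma\<^sup>2*T/n + L\<^sup>2*K"
  shows "(1 - 9 * eta\<^sup>2 * L\<^sup>2 * C\<^sup>2 / (P * (1 - q)\<^sup>2)) * S
         \<le> 2 * Dl / eta + L * eta * sigma\<^sup>2 * real T / real n
           + 3 * L\<^sup>2 * C\<^sup>2 * X0\<^sup>2 / (P * (1 - q)\<^sup>2)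
           + 3 * eta\<^sup>2 * L\<^sup>2 * C\<^sup>2 * real n * sigma\<^sup>2 * real T / (P * (1 - q)\<^sup>2)
           + 9 * eta\<^sup>2 * L\<^sup>2 * C\<^sup>2 * real n * zeta\<^sup>2 * real T / (P * (1 - q)\<^sup>2)"
proof -
  define u where "u = 1 / (P * (1-q)\<^sup>2)"
  have qq: "(1-q)\<^sup>2 > 0" using q1 by simp
  have K1: "K \<le> (3*C\<^sup>2*X0\<^sup>2/(1-q)\<^sup>2 + 3*(eta\<^sup>2*C\<^sup>2/(1-q)\<^sup>2)*n* sigma\<^sup>2*T
                 + 9*(eta\<^sup>2*C\<^sup>2/(1-q)\<^sup>2)*n*zeta\<^sup>2*T + 9*(eta\<^sup>2*C\<^sup>2/(1-q)\<^sup>2)*S) / P"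
    using PK Pp by (simp add: pos_le_divide_eq mult.commute)
  have K2: "L\<^sup>2*K \<le> L\<^sup>2 * ((3*C\<^sup>2*X0\<^sup>2/(1-q)\<^sup>2 + 3*(eta\<^sup>2*C\<^sup>2/(1-q)\<^sup>2)*n* sigma\<^sup>2*T
                 + 9*(eta\<^sup>2*C\<^sup>2/(1-q)\<^sup>2)*n*zeta\<^sup>2*T + 9*(eta\<^sup>2*C\<^sup>2/(1-q)\<^sup>2)*S) / P)"
    by (rule mult_left_mono[OF K1]) simp
  have e: "L\<^sup>2 * ((3*C\<^sup>2*X0\<^sup>2/(1-q)\<^sup>2 + 3*(eta\<^sup>2*C\<^sup>2/(1-q)\<^sup>2)*n* sigma\<^sup>2*T
                 + 9*(eta\<^sup>2*C\<^sup>2/(1-q)\<^sup>2)*n*zeta\<^sup>2*T + 9*(eta\<^sup>2*C\<^sup>2/(1-q)\<^sup>2)*S) / P)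
     = 3 * L\<^sup>2 * C\<^sup>2 * X0\<^sup>2 / (P * (1 - q)\<^sup>2)
           + 3 * eta\<^sup>2 * L\<^sup>2 * C\<^sup>2 * real n * sigma\<^sup>2 * real T / (P * (1 - q)\<^sup>2)
           + 9 * eta\<^sup>2 * L\<^sup>2 * C\<^sup>2 * real n * zeta\<^sup>2 * real T / (P * (1 - q)\<^sup>2)
           + 9 * eta\<^sup>2 * L\<^sup>2 * C\<^sup>2 / (P * (1 - q)\<^sup>2) * S"
    using Pp qq by (simp add: field_simps)
  have e2: "(1 - 9 * eta\<^sup>2 * L\<^sup>2 * C\<^sup>2 / (P * (1 - q)\<^sup>2)) * S = S - 9 * eta\<^sup>2 * L\<^sup>2 * C\<^sup>2 / (P * (1 - q)\<^sup>2) * S"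
    by (simp add: algebra_simps)
  show ?thesis using SK K2 e e2 by linarith
qed

lemma mid_alg:
  fixes TT Kc c1 kap L sigma zeta S P :: real and n T :: nat
  assumes n0: "0 < n" and TT: "TT = n * Kc"
    and le: "TT \<le> n*c1 + n*(3/2*kap)*(2*real n* sigma\<^sup>2*real T + 6*L\<^sup>2*TT + 6*real n*zeta\<^sup>2*real T + 6*S)"
    and P: "P = 1 - 9*kap*L\<^sup>2*n"
  shows "P * Kc \<le> c1 + 3*kap*n* sigma\<^sup>2*T + 9*kap*n*zeta\<^sup>2*T + 9*kap*S"
proof -
  have "n * Kc \<le> n * (c1 + (3/2*kap)*(2*real n* sigma\<^sup>2*real T + 6*L\<^sup>2*(real n*Kc) + 6*real n*zeta\<^sup>2*real T + 6*S))"
    using le TT by (simp add: algebra_simps)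
  then have "Kc \<le> c1 + (3/2*kap)*(2*real n* sigma\<^sup>2*real T + 6*L\<^sup>2*(real n*Kc) + 6*real n*zeta\<^sup>2*real T + 6*S)"
    using n0 by simp
  then show ?thesis unfolding P by (simp add: algebra_simps)
qed

lemma sk_alg:
  fixes eta L S S2 Dl sigma Kc :: real and n T :: nat
  assumes eta0: "0 < eta" and Leta: "L * eta \<le> 1" and S2: "0 \<le> S2" and n0: "0 < n"
    and cum: "eta / 2 * S + (eta - L * eta\<^sup>2) / 2 * S2 \<le> Dl + L * eta\<^sup>2 * sigma\<^sup>2 / (2 * real n) * real T + eta * L\<^sup>2 / 2 * Kc"
  shows "S \<le> 2*Dl/eta + L*eta* sigma\<^sup>2*T/n + L\<^sup>2*Kc"
proof -
  have "0 \<le> eta - L * eta\<^sup>2" using Leta eta0 by (simp add: power2_eq_square algebra_simps mult_right_le_one_le)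
  then have "0 \<le> (eta - L * eta\<^sup>2) / 2 * S2" using S2 by simp
  then have "eta / 2 * S \<le> Dl + L * eta\<^sup>2 * sigma\<^sup>2 / (2 * real n) * real T + eta * L\<^sup>2 / 2 * Kc" using cum by linarith
  then have "2/eta * (eta / 2 * S) \<le> 2/eta * (Dl + L * eta\<^sup>2 * sigma\<^sup>2 / (2 * real n) * real T + eta * L\<^sup>2 / 2 * Kc)"
    using eta0 by (intro mult_left_mono) auto
  then show ?thesis using eta0 n0 by (simp add: field_simps power2_eq_square)
qed

theorem lemmaA7:
  fixes n B Delta T :: nat
    and Eg :: "(nat \<times> nat) set"
    and W :: "nat \<Rightarrow> nat \<Rightarrow> nat \<Rightarrow> real"
    and L sigma zeta eta delta C q P X0 fstar :: real
    and F :: "nat \<Rightarrow> 'a::euclidean_space \<Rightarrow> real"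
    and gradF :: "nat \<Rightarrow> 'a \<Rightarrow> 'a"
    and g :: "nat \<Rightarrow> 'a \<Rightarrow> 'c \<Rightarrow> 'a"
    and D :: "nat \<Rightarrow> 'c measure"
    and M :: "'w measure"
    and xi :: "nat \<Rightarrow> nat \<Rightarrow> 'w \<Rightarrow> 'c"
    and x :: "nat \<Rightarrow> nat \<Rightarrow> 'w \<Rightarrow> 'a"
    and z :: "nat \<Rightarrow> nat \<Rightarrow> 'w \<Rightarrow> 'a"
    and w :: "nat \<Rightarrow> nat \<Rightarrow> real"
    and x0 :: "nat \<Rightarrow> 'a"
  assumes n2: "n \<ge> 2"
    (* base topology: bidirected, with self-loops, on nodes 0..n-1 *)
    and Eg_nodes: "Eg \<subseteq> {..<n} \<times> {..<n}"
    and Eg_loops: "\<forall>i<n. (i, i) \<in> Eg"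
    and Eg_sym: "\<forall>i j. (i, j) \<in> Eg \<longrightarrow> (j, i) \<in> Eg"
    (* mixing matrices *)
    and W_nonneg: "\<forall>t. \<forall>i<n. \<forall>j<n. 0 \<le> W t i j"
    and W_colstoch: "\<forall>t. \<forall>j<n. (\<Sum>i<n. W t i j) = 1"
    and W_support: "\<forall>t. \<forall>i<n. \<forall>j<n. W t i j \<noteq> 0 \<longrightarrow> (j, i) \<in> Eg"
    (* Assumption (4) *)
    and B_pos: "0 < B" and Delta_pos: "0 < Delta"
    and connectivity: "\<forall>l. strongly_connected_diam_le n
                          (\<Union>t\<in>{l * B..<(Suc l) * B}. active_edges Eg W t) Delta"
    (* constants *)
    and delta_def: "delta = Inf {W t i j | t i j. i < n \<and> j < n \<and> 0 < W t i j}"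
    and delta_pos: "0 < delta"
    and C_def: "C = 4 / delta ^ (Delta * B)"
    and q_def: "q = (1 - delta ^ (Delta * B)) powr (1 / real (Delta * B))"
    (* Assumption (1): L-smoothness *)
    and F_grad: "\<forall>i<n. \<forall>y. (F i has_derivative (\<lambda>h. gradF i y \<bullet> h)) (at y)"
    and F_smooth: "\<forall>i<n. \<forall>y y'. norm (gradF i y - gradF i y') \<le> L * norm (y - y')"
    (* optimal value of f *)
    and f_bdd: "bdd_below (range (\<lambda>y. avg n (\<lambda>i. F i y)))"
    and fstar_def: "fstar = (INF y. avg n (\<lambda>i. F i y))"
    (* stochastic gradients and Assumption (2) *)
    and D_prob: "\<forall>i<n. prob_space (D i)"
    and g_meas: "\<forall>i<n. (\<lambda>p. g i (fst p) (snd p)) \<in> borel_measurable (borel \<Otimes>\<^sub>M D i)"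
    and noise: "\<forall>i<n. \<forall>y. (\<integral>\<^sup>+ s. ennreal ((norm (g i y s - gradF i y))\<^sup>2) \<partial>D i)
                         \<le> ennreal (sigma\<^sup>2)"
    (* Assumption (3) *)
    and heterog: "\<forall>y. avg n (\<lambda>i. (norm (gradF i y - avg n (\<lambda>j. gradF j y)))\<^sup>2) \<le> zeta\<^sup>2"
    (* fresh independent minibatches *)
    and M_prob: "prob_space M"
    and xi_meas: "\<forall>t. \<forall>i<n. xi t i \<in> measurable M (D i)"
    and xi_distr: "\<forall>t. \<forall>i<n. distr M (D i) (xi t i) = D i"
    and xi_indep: "prob_space.indep_vars M (\<lambda>p. D (snd p)) (\<lambda>p. xi (fst p) (snd p))
                     (UNIV \<times> {..<n})"
    (* SGP iteration *)
    and x_init: "\<forall>i<n. \<forall>\<omega>. x 0 i \<omega> = x0 i"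
    and x_step: "\<forall>t. \<forall>i<n. \<forall>\<omega>. x (Suc t) i \<omega> =
                   (\<Sum>j<n. W t i j *\<^sub>R (x t j \<omega> - eta *\<^sub>R g j (z t j \<omega>) (xi t j \<omega>)))"
    and w_init: "\<forall>i<n. w 0 i = 1"
    and w_step: "\<forall>t. \<forall>i<n. w (Suc t) i = (\<Sum>j<n. W t i j * w t j)"
    and z_def: "\<forall>t. \<forall>i<n. \<forall>\<omega>. z t i \<omega> = inverse (w t i) *\<^sub>R x t i \<omega>"
    (* average consensus error bound *)
    and X0_def: "X0 = (MAX m\<in>{..<n}. norm (x0 m))"
    and consensus: "\<forall>t. AE \<omega> in M. \<forall>i<n.
          norm (avg n (\<lambda>j. x t j \<omega>) - z t i \<omega>)
            \<le> C * q ^ t * X0 + eta * C * (\<Sum>s\<le>t. q ^ (t - s) *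
                 (MAX j\<in>{..<n}. norm (g j (z s j \<omega>) (xi s j \<omega>))))"
    and P_def: "P = 1 - 9 * eta\<^sup>2 * C\<^sup>2 * L\<^sup>2 * real n / (1 - q)\<^sup>2"
    and P_pos: "0 < P"
    (* step size and horizon *)
    and eta_pos: "0 < eta" and eta_le: "eta \<le> 1 / L"
    and T_ge: "1 \<le> T"
    (* cumulative descent inequality *)
    and cumulative:
      "eta / 2 * (\<Sum>t<T. \<integral>\<omega>. (norm (avg n (\<lambda>i. gradF i (avg n (\<lambda>j. x t j \<omega>)))))\<^sup>2 \<partial>M)
       + (eta - L * eta\<^sup>2) / 2 * (\<Sum>t<T. \<integral>\<omega>. (norm (avg n (\<lambda>i. gradF i (z t i \<omega>))))\<^sup>2 \<partial>M)
       \<le> avg n (\<lambda>i. F i (avg n x0)) - fstar + L * eta\<^sup>2 * sigma\<^sup>2 / (2 * real n) * real T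
         + eta * L\<^sup>2 / 2 * (\<Sum>t<T. avg n (\<lambda>i. \<integral>\<omega>. (norm (avg n (\<lambda>j. x t j \<omega>) - z t i \<omega>))\<^sup>2 \<partial>M))"
  shows "(1 - 9 * eta\<^sup>2 * L\<^sup>2 * C\<^sup>2 / (P * (1 - q)\<^sup>2))
           * (\<Sum>t<T. \<integral>\<omega>. (norm (avg n (\<lambda>i. gradF i (avg n (\<lambda>j. x t j \<omega>)))))\<^sup>2 \<partial>M)
         \<le> 2 * (avg n (\<lambda>i. F i (avg n x0)) - fstar) / eta + L * eta * sigma\<^sup>2 * real T / real n
           + 3 * L\<^sup>2 * C\<^sup>2 * X0\<^sup>2 / (P * (1 - q)\<^sup>2)
           + 3 * eta\<^sup>2 * L\<^sup>2 * C\<^sup>2 * real n * sigma\<^sup>2 * real T / (P * (1 - q)\<^sup>2)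
           + 9 * eta\<^sup>2 * L\<^sup>2 * C\<^sup>2 * real n * zeta\<^sup>2 * real T / (P * (1 - q)\<^sup>2)"
proof -
  interpret prob_space M by (rule M_prob)
  have fmM: "finite_measure M" using M_prob by (simp add: prob_space_def)
  have n0: "0 < n" using n2 by simp
  have Lpos: "0 < L"
  proof (rule ccontr)
    assume "\<not> 0 < L"
    then have "1/L \<le> 0" by (simp add: not_less divide_nonpos_pos divide_le_0_iff)
    then show False using eta_pos eta_le by linarith
  qed
  have del1: "delta \<le> 1"
  proof -
    have sum1: "(\<Sum>i<n. W 0 i 0) = 1" using W_colstoch n0 by auto
    have "\<exists>i<n. 0 < W 0 i 0"
    proof (rule ccontr)
      assume "\<not> (\<exists>i<n. 0 < W 0 i 0)"
      then have "\<forall>i<n. W 0 i 0 = 0" using W_nonneg n0 by (meson order.antisym not_less)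
      then have "(\<Sum>i<n. W 0 i 0) = 0" by simp
      then show False using sum1 by simp
    qed
    then obtain i where i: "i < n" "0 < W 0 i 0" by blast
    have "W 0 i 0 \<le> (\<Sum>i<n. W 0 i 0)"
      by (rule member_le_sum) (use i W_nonneg n0 in auto)
    then have w1: "W 0 i 0 \<le> 1" using sum1 by simp
    have "delta \<le> W 0 i 0" unfolding delta_def
    proof (rule cInf_lower)
      show "W 0 i 0 \<in> {W t i j |t i j. i < n \<and> j < n \<and> 0 < W t i j}" using i n0 by blast
      show "bdd_below {W t i j |t i j. i < n \<and> j < n \<and> 0 < W t i j}"
        by (rule bdd_belowI[of _ 0]) auto
    qed
    then show ?thesis using w1 by simp
  qed
  define a where "a = delta ^ (Delta * B)"
  have a0: "0 < a" using delta_pos by (simp add: a_def)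
  have a1: "a \<le> 1" using delta_pos del1 by (simp add: a_def power_le_one)
  have DB: "0 < real (Delta * B)" using B_pos Delta_pos by simp
  have q0: "0 \<le> q" using q_def by simp
  have q1: "q < 1"
  proof -
    have "(1 - a) powr (1 / real (Delta * B)) < 1 powr (1 / real (Delta * B))"
      by (rule powr_less_mono2) (use DB a0 a1 in auto)
    then show ?thesis using q_def a_def by simp
  qed
  have C0: "0 \<le> C" using C_def delta_pos by simp
  have X00: "0 \<le> X0"
  proof -
    have "norm (x0 0) \<le> X0" unfolding X0_def by (rule Max_ge) (use n0 in auto)
    then show ?thesis by (meson norm_ge_zero order_trans)
  qed
  define XR where "XR = Xr n W w eta g x0"
  define N where "N = (\<lambda>p::nat\<times>nat. D (snd p))"
  define Kt where "Kt = (\<lambda>t::nat. {..<t} \<times> {..<n})"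
  define Y where "Y = (\<lambda>t \<omega>. restrict (\<lambda>p. xi (fst p) (snd p) \<omega>) (Kt t))"
  have xX: "\<And>i \<omega>. i < n \<Longrightarrow> x t i \<omega> = XR t i (\<lambda>p. xi (fst p) (snd p) \<omega>)" for t
  proof (induction t)
    case 0 then show ?case by (simp add: XR_def x_init)
  next
    case (Suc t)
    show ?case using Suc x_step z_def by (auto simp: XR_def intro!: sum.cong)
  qed
  have xY: "\<And>t i \<omega>. i < n \<Longrightarrow> x t i \<omega> = XR t i (Y t \<omega>)"
  proof -
    fix t i \<omega> assume i: "i < n"
    have "XR t i (\<lambda>p. xi (fst p) (snd p) \<omega>) = XR t i (Y t \<omega>)"
      unfolding XR_def by (rule Xr_local) (auto simp: Y_def Kt_def)
    then show "x t i \<omega> = XR t i (Y t \<omega>)" using xX[OF i] by simp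
  qed
  have Ym: "\<And>t. Y t \<in> measurable M (PiM (Kt t) N)"
    unfolding Y_def by (rule measurable_restrict) (auto simp: N_def Kt_def xi_meas)
  have XRm: "\<And>t i. XR t i \<in> borel_measurable (PiM (Kt t) N)"
    unfolding XR_def N_def by (rule Xr_meas[OF g_meas]) (simp add: Kt_def)
  have xm: "\<And>t i. i < n \<Longrightarrow> x t i \<in> borel_measurable M"
  proof -
    fix t i assume i: "i < n"
    have "(\<lambda>\<omega>. XR t i (Y t \<omega>)) \<in> borel_measurable M"
      using measurable_comp[OF Ym XRm] by (simp add: o_def)
    moreover have "x t i = (\<lambda>\<omega>. XR t i (Y t \<omega>))" using xY[OF i] by auto
    ultimately show "x t i \<in> borel_measurable M" by simp
  qed
  have zfun: "\<And>t i. i < n \<Longrightarrow> z t i = (\<lambda>\<omega>. inverse (w t i) *\<^sub>R x t i \<omega>)"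
    using z_def by auto
  have zm: "\<And>t i. i < n \<Longrightarrow> z t i \<in> borel_measurable M"
  proof -
    fix t i assume i: "i < n"
    show "z t i \<in> borel_measurable M" unfolding zfun[OF i] using xm[OF i] by measurable
  qed
  have lipF: "\<And>i. i < n \<Longrightarrow> L-lipschitz_on UNIV (gradF i)"
    by (rule lipschitz_onI) (use F_smooth Lpos in \<open>auto simp: dist_norm\<close>)
  have gradm: "\<And>i. i < n \<Longrightarrow> gradF i \<in> borel_measurable borel"
    by (rule borel_measurable_continuous_onI, rule lipschitz_on_continuous_on, erule lipF)
  have gm: "\<And>s j. j < n \<Longrightarrow> (\<lambda>\<omega>. g j (z s j \<omega>) (xi s j \<omega>)) \<in> borel_measurable M"
  proof -
    fix s j assume j: "j < n"
    have pm: "(\<lambda>\<omega>. (z s j \<omega>, xi s j \<omega>)) \<in> measurable M (borel \<Otimes>\<^sub>M D j)"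
    proof -
      have "xi s j \<in> measurable M (D j)" using xi_meas j by auto
      then show ?thesis using zm[OF j] by measurable
    qed
    have "(\<lambda>p. g j (fst p) (snd p)) \<circ> (\<lambda>\<omega>. (z s j \<omega>, xi s j \<omega>)) \<in> borel_measurable M"
      using measurable_comp[OF pm] g_meas j by blast
    then show "(\<lambda>\<omega>. g j (z s j \<omega>) (xi s j \<omega>)) \<in> borel_measurable M" by (simp add: o_def)
  qed
  have nm: "\<And>s j. j < n \<Longrightarrow> (\<lambda>\<omega>. g j (z s j \<omega>) (xi s j \<omega>) - gradF j (z s j \<omega>)) \<in> borel_measurable M"
  proof -
    fix s j assume j: "j < n"
    show "(\<lambda>\<omega>. g j (z s j \<omega>) (xi s j \<omega>) - gradF j (z s j \<omega>)) \<in> borel_measurable M"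
      using gm[OF j] zm[OF j] gradm[OF j] by measurable
  qed
  have noise_nn: "\<And>s j. j < n \<Longrightarrow> (\<integral>\<^sup>+\<omega>. ennreal ((norm (g j (z s j \<omega>) (xi s j \<omega>) - gradF j (z s j \<omega>)))\<^sup>2) \<partial>M) \<le> ennreal (sigma\<^sup>2)"
  proof -
    fix s j assume j: "j < n"
    have Phim: "(\<lambda>c. inverse (w s j) *\<^sub>R XR s j c) \<in> measurable (PiM ({..<s}\<times>{..<n}) (\<lambda>p. D (snd p))) borel"
      using XRm[of s j] unfolding Kt_def N_def by measurable
    have hm: "(\<lambda>p. ennreal ((norm (g j (fst p) (snd p) - gradF j (fst p)))\<^sup>2)) \<in> borel_measurable (borel \<Otimes>\<^sub>M D j)"
    proof -
      have g1: "(\<lambda>p. g j (fst p) (snd p)) \<in> borel_measurable (borel \<Otimes>\<^sub>M D j)" using g_meas j by auto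
      have g2: "(\<lambda>p. gradF j (fst p)) \<in> borel_measurable (borel \<Otimes>\<^sub>M D j)"
        using measurable_comp[OF measurable_fst gradm[OF j]] by (simp add: o_def)
      show ?thesis using g1 g2 by measurable
    qed
    have eq: "\<And>\<omega>. inverse (w s j) *\<^sub>R XR s j (restrict (\<lambda>p. xi (fst p) (snd p) \<omega>) ({..<s}\<times>{..<n})) = z s j \<omega>"
      using z_def xY j by (simp add: Y_def Kt_def)
    have "(\<integral>\<^sup>+ \<omega>. (\<lambda>p. ennreal ((norm (g j (fst p) (snd p) - gradF j (fst p)))\<^sup>2))
        ((\<lambda>c. inverse (w s j) *\<^sub>R XR s j c) (restrict (\<lambda>p. xi (fst p) (snd p) \<omega>) ({..<s}\<times>{..<n})), xi s j \<omega>) \<partial>M)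
        \<le> ennreal (sigma\<^sup>2)"
      by (rule indep_noise[OF M_prob D_prob xi_meas xi_distr xi_indep j Phim hm]) (use noise j in simp)
    then show "(\<integral>\<^sup>+\<omega>. ennreal ((norm (g j (z s j \<omega>) (xi s j \<omega>) - gradF j (z s j \<omega>)))\<^sup>2) \<partial>M) \<le> ennreal (sigma\<^sup>2)"
      by (simp only: eq fst_conv snd_conv)
  qed
  have sq_n: "\<And>s j. j < n \<Longrightarrow> sqi M (\<lambda>\<omega>. g j (z s j \<omega>) (xi s j \<omega>) - gradF j (z s j \<omega>))"
    using sqi_nn(1)[OF nm _ noise_nn] by simp
  have int_n: "\<And>s j. j < n \<Longrightarrow> (\<integral>\<omega>. (norm (g j (z s j \<omega>) (xi s j \<omega>) - gradF j (z s j \<omega>)))\<^sup>2 \<partial>M) \<le> sigma\<^sup>2"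
    using sqi_nn(2)[OF nm _ noise_nn] by simp
  have sq_lipF: "\<And>i f. i < n \<Longrightarrow> sqi M f \<Longrightarrow> sqi M (\<lambda>\<omega>. gradF i (f \<omega>))"
  proof -
    fix i and f :: "'w \<Rightarrow> 'a" assume i: "i < n" and f: "sqi M f"
    show "sqi M (\<lambda>\<omega>. gradF i (f \<omega>))"
      by (rule sqi_lip[OF f fmM gradm[OF i], where L=L]) (use Lpos F_smooth i in auto)
  qed
  have sq_x: "\<And>i. i < n \<Longrightarrow> sqi M (x t i)" for t
  proof (induction t)
    case 0
    have "x 0 i = (\<lambda>_. x0 i)" using x_init 0 by auto
    then show ?case using sqi_const[OF fmM] by simp
  next
    case (Suc t)
    have sz: "\<And>j. j < n \<Longrightarrow> sqi M (z t j)" using Suc.IH zfun sqi_scale by metis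
    have "x (Suc t) i = (\<lambda>\<omega>. \<Sum>j<n. W t i j *\<^sub>R (x t j \<omega> - eta *\<^sub>R
             ((g j (z t j \<omega>) (xi t j \<omega>) - gradF j (z t j \<omega>)) + gradF j (z t j \<omega>))))"
      using x_step Suc.prems by auto
    moreover have "sqi M (\<lambda>\<omega>. \<Sum>j<n. W t i j *\<^sub>R (x t j \<omega> - eta *\<^sub>R
             ((g j (z t j \<omega>) (xi t j \<omega>) - gradF j (z t j \<omega>)) + gradF j (z t j \<omega>))))"
      by (intro sqi_sum fmM sqi_scale sqi_diff sqi_add Suc.IH sq_n sq_lipF sz) auto
    ultimately show ?case by simp
  qed
  have sq_z: "\<And>t i. i < n \<Longrightarrow> sqi M (z t i)" using sq_x zfun sqi_scale by metis
  have sq_xb: "\<And>t. sqi M (\<lambda>\<omega>. avg n (\<lambda>j. x t j \<omega>))"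
    unfolding avg_def by (intro sqi_scale sqi_sum fmM sq_x) auto
  have sq_e: "\<And>t i. i < n \<Longrightarrow> sqi M (\<lambda>\<omega>. avg n (\<lambda>j. x t j \<omega>) - z t i \<omega>)"
    by (intro sqi_diff sq_xb sq_z)
  have sq_gf: "\<And>t. sqi M (\<lambda>\<omega>. avg n (\<lambda>i. gradF i (avg n (\<lambda>j. x t j \<omega>))))"
    unfolding avg_def[of n "\<lambda>i. gradF i _"] by (intro sqi_scale sqi_sum fmM sq_lipF sq_xb) auto
  define Hf where "Hf = (\<lambda>s \<omega>. 2*(\<Sum>j<n. (norm (g j (z s j \<omega>) (xi s j \<omega>) - gradF j (z s j \<omega>)))\<^sup>2)
      + 6*L\<^sup>2*(\<Sum>j<n. (norm (avg n (\<lambda>j'. x s j' \<omega>) - z s j \<omega>))\<^sup>2) + 6*real n*zeta\<^sup>2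
      + 6*(norm (avg n (\<lambda>i. gradF i (avg n (\<lambda>j. x s j \<omega>)))))\<^sup>2)"
  have avg_real: "\<And>f::nat\<Rightarrow>real. (\<Sum>i<n. f i) = real n * avg n f"
    using n0 by (simp add: avg_def)
  have G0: "\<And>s \<omega>. 0 \<le> (MAX j\<in>{..<n}. norm (g j (z s j \<omega>) (xi s j \<omega>)))"
  proof -
    fix s \<omega>
    have "norm (g 0 (z s 0 \<omega>) (xi s 0 \<omega>)) \<le> (MAX j\<in>{..<n}. norm (g j (z s j \<omega>) (xi s j \<omega>)))"
      by (rule Max_ge) (use n0 in auto)
    then show "0 \<le> (MAX j\<in>{..<n}. norm (g j (z s j \<omega>) (xi s j \<omega>)))" by (meson norm_ge_zero order_trans)
  qed
  have GH: "\<And>s \<omega>. (MAX j\<in>{..<n}. norm (g j (z s j \<omega>) (xi s j \<omega>)))\<^sup>2 \<le> Hf s \<omega>"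
  proof -
    fix s \<omega>
    define xb where "xb = avg n (\<lambda>j. x s j \<omega>)"
    define gfv where "gfv = avg n (\<lambda>i. gradF i xb)"
    have fin: "finite ((\<lambda>j. norm (g j (z s j \<omega>) (xi s j \<omega>))) ` {..<n})" by simp
    have ne: "(\<lambda>j. norm (g j (z s j \<omega>) (xi s j \<omega>))) ` {..<n} \<noteq> {}" using n0 by auto
    obtain jm where jm: "jm < n" "(MAX j\<in>{..<n}. norm (g j (z s j \<omega>) (xi s j \<omega>))) = norm (g jm (z s jm \<omega>) (xi s jm \<omega>))"
      using Max_in[OF fin ne] by auto
    define A where "A = norm (g jm (z s jm \<omega>) (xi s jm \<omega>) - gradF jm (z s jm \<omega>))"
    define Bv where "Bv = L * norm (xb - z s jm \<omega>)"
    define Cv where "Cv = norm (gradF jm xb - gfv)"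
    define Dv where "Dv = norm gfv"
    have tri: "norm (g jm (z s jm \<omega>) (xi s jm \<omega>)) \<le> A + Bv + Cv + Dv"
    proof -
      have e: "g jm (z s jm \<omega>) (xi s jm \<omega>) = (g jm (z s jm \<omega>) (xi s jm \<omega>) - gradF jm (z s jm \<omega>))
          + (gradF jm (z s jm \<omega>) - gradF jm xb) + (gradF jm xb - gfv) + gfv" by simp
      have n4: "\<And>a b c d :: 'a. norm (a + b + c + d) \<le> norm a + norm b + norm c + norm d"
      proof -
        fix a b c d :: 'a
        show "norm (a + b + c + d) \<le> norm a + norm b + norm c + norm d"
          using norm_triangle_ineq[of "a+b+c" d] norm_triangle_ineq[of "a+b" c] norm_triangle_ineq[of a b] by linarith
      qed
      have l: "norm (gradF jm (z s jm \<omega>) - gradF jm xb) \<le> Bv"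
        using F_smooth jm(1) by (simp add: Bv_def norm_minus_commute)
      show ?thesis using n4[of "g jm (z s jm \<omega>) (xi s jm \<omega>) - gradF jm (z s jm \<omega>)" "gradF jm (z s jm \<omega>) - gradF jm xb"
            "gradF jm xb - gfv" gfv] e l by (simp add: A_def Cv_def Dv_def)
    qed
    have B0: "0 \<le> Bv" using Lpos by (simp add: Bv_def)
    have "(norm (g jm (z s jm \<omega>) (xi s jm \<omega>)))\<^sup>2 \<le> (A + Bv + Cv + Dv)\<^sup>2"
      by (rule power_mono[OF tri]) simp
    also have "\<dots> \<le> 2*A\<^sup>2 + 6*Bv\<^sup>2 + 6*Cv\<^sup>2 + 6*Dv\<^sup>2" by (rule four_sq)
    finally have s1: "(norm (g jm (z s jm \<omega>) (xi s jm \<omega>)))\<^sup>2 \<le> 2*A\<^sup>2 + 6*Bv\<^sup>2 + 6*Cv\<^sup>2 + 6*Dv\<^sup>2" .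
    have hA: "A\<^sup>2 \<le> (\<Sum>j<n. (norm (g j (z s j \<omega>) (xi s j \<omega>) - gradF j (z s j \<omega>)))\<^sup>2)"
      unfolding A_def by (rule member_le_sum[where f="\<lambda>j. (norm (g j (z s j \<omega>) (xi s j \<omega>) - gradF j (z s j \<omega>)))\<^sup>2"]) (use jm in auto)
    have hB0: "(norm (xb - z s jm \<omega>))\<^sup>2 \<le> (\<Sum>j<n. (norm (xb - z s j \<omega>))\<^sup>2)"
      by (rule member_le_sum[where f="\<lambda>j. (norm (xb - z s j \<omega>))\<^sup>2"]) (use jm in auto)
    have hB: "Bv\<^sup>2 \<le> L\<^sup>2 * (\<Sum>j<n. (norm (xb - z s j \<omega>))\<^sup>2)"
      unfolding Bv_def power_mult_distrib by (rule mult_left_mono[OF hB0]) simp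
    have hC0: "Cv\<^sup>2 \<le> (\<Sum>j<n. (norm (gradF j xb - gfv))\<^sup>2)"
      unfolding Cv_def by (rule member_le_sum[where f="\<lambda>j. (norm (gradF j xb - gfv))\<^sup>2"]) (use jm in auto)
    have "(\<Sum>j<n. (norm (gradF j xb - gfv))\<^sup>2) = real n * avg n (\<lambda>j. (norm (gradF j xb - gfv))\<^sup>2)"
      by (rule avg_real)
    also have "\<dots> \<le> real n * zeta\<^sup>2"
      using heterog[rule_format, of xb] by (intro mult_left_mono) (auto simp: gfv_def)
    finally have hC: "Cv\<^sup>2 \<le> real n * zeta\<^sup>2" using hC0 by linarith
    have "2*A\<^sup>2 + 6*Bv\<^sup>2 + 6*Cv\<^sup>2 + 6*Dv\<^sup>2 \<le> Hf s \<omega>"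
    proof -
      have "Hf s \<omega> = 2*(\<Sum>j<n. (norm (g j (z s j \<omega>) (xi s j \<omega>) - gradF j (z s j \<omega>)))\<^sup>2)
         + 6*(L\<^sup>2*(\<Sum>j<n. (norm (xb - z s j \<omega>))\<^sup>2)) + 6*real n*zeta\<^sup>2 + 6*Dv\<^sup>2"
        by (simp add: Hf_def xb_def Dv_def gfv_def)
      then show ?thesis using hA hB hC by linarith
    qed
    then show "(MAX j\<in>{..<n}. norm (g j (z s j \<omega>) (xi s j \<omega>)))\<^sup>2 \<le> Hf s \<omega>" using s1 jm(2) by simp
  qed
  have AEc: "AE \<omega> in M. \<forall>t. \<forall>i<n. norm (avg n (\<lambda>j. x t j \<omega>) - z t i \<omega>)
            \<le> C * q ^ t * X0 + eta * C * (\<Sum>s\<le>t. q ^ (t - s) *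
                 (MAX j\<in>{..<n}. norm (g j (z s j \<omega>) (xi s j \<omega>))))"
    using consensus by (simp add: AE_all_countable)
  have pw: "AE \<omega> in M. (\<Sum>t<T. \<Sum>i<n. (norm (avg n (\<lambda>j. x t j \<omega>) - z t i \<omega>))\<^sup>2)
      \<le> real n * (3*C\<^sup>2*X0\<^sup>2/(1-q)\<^sup>2) + real n * (3/2*eta\<^sup>2*C\<^sup>2/(1-q)\<^sup>2) * (\<Sum>s<T. Hf s \<omega>)"
    using AEc
  proof eventually_elim
    case (elim \<omega>)
    show ?case
      by (rule pointwise[where e="\<lambda>t i. norm (avg n (\<lambda>j. x t j \<omega>) - z t i \<omega>)"
            and G="\<lambda>s. MAX j\<in>{..<n}. norm (g j (z s j \<omega>) (xi s j \<omega>))" and H="\<lambda>s. Hf s \<omega>", OF q0 q1 C0 X00])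
         (use elim eta_pos GH G0 in auto)
  qed
  define Ie where "Ie = (\<lambda>t i. \<integral>\<omega>. (norm (avg n (\<lambda>j. x t j \<omega>) - z t i \<omega>))\<^sup>2 \<partial>M)"
  define Sg where "Sg = (\<lambda>t. \<integral>\<omega>. (norm (avg n (\<lambda>i. gradF i (avg n (\<lambda>j. x t j \<omega>)))))\<^sup>2 \<partial>M)"
  have ie: "\<And>t i. i < n \<Longrightarrow> integrable M (\<lambda>\<omega>. (norm (avg n (\<lambda>j. x t j \<omega>) - z t i \<omega>))\<^sup>2)"
    using sq_e by (simp add: sqi_def)
  have inz: "\<And>s j. j < n \<Longrightarrow> integrable M (\<lambda>\<omega>. (norm (g j (z s j \<omega>) (xi s j \<omega>) - gradF j (z s j \<omega>)))\<^sup>2)"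
    using sq_n by (simp add: sqi_def)
  have igf: "\<And>t. integrable M (\<lambda>\<omega>. (norm (avg n (\<lambda>i. gradF i (avg n (\<lambda>j. x t j \<omega>)))))\<^sup>2)"
    using sq_gf by (simp add: sqi_def)
  have ise: "\<And>t. integrable M (\<lambda>\<omega>. \<Sum>i<n. (norm (avg n (\<lambda>j. x t j \<omega>) - z t i \<omega>))\<^sup>2)"
    by (rule Bochner_Integration.integrable_sum) (use ie in auto)
  have isn: "\<And>s. integrable M (\<lambda>\<omega>. \<Sum>j<n. (norm (g j (z s j \<omega>) (xi s j \<omega>) - gradF j (z s j \<omega>)))\<^sup>2)"
    by (rule Bochner_Integration.integrable_sum) (use inz in auto)
  have ise2: "\<And>s. integrable M (\<lambda>\<omega>. \<Sum>j<n. (norm (avg n (\<lambda>j'. x s j' \<omega>) - z s j \<omega>))\<^sup>2)"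
    using ise by simp
  have iH: "\<And>s. integrable M (Hf s)"
    unfolding Hf_def
    by (intro Bochner_Integration.integrable_add integrable_mult_right isn ise2 igf integrable_const)
  have intH: "\<And>s. integral\<^sup>L M (Hf s) \<le> 2*(real n* sigma\<^sup>2) + 6*L\<^sup>2*(\<Sum>j<n. Ie s j) + 6*real n*zeta\<^sup>2 + 6*Sg s"
  proof -
    fix s
    have "integral\<^sup>L M (Hf s) = 2*(\<Sum>j<n. \<integral>\<omega>. (norm (g j (z s j \<omega>) (xi s j \<omega>) - gradF j (z s j \<omega>)))\<^sup>2 \<partial>M)
         + 6*L\<^sup>2*(\<Sum>j<n. Ie s j) + 6*real n*zeta\<^sup>2 + 6*Sg s"
      unfolding Hf_def Ie_def Sg_def
      apply (subst Bochner_Integration.integral_add, (intro Bochner_Integration.integrable_add integrable_mult_right isn ise2 igf integrable_const)+)+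
      apply (simp add: Bochner_Integration.integral_sum ie inz prob_space)
      done
    also have "(\<Sum>j<n. \<integral>\<omega>. (norm (g j (z s j \<omega>) (xi s j \<omega>) - gradF j (z s j \<omega>)))\<^sup>2 \<partial>M) \<le> (\<Sum>j<n. sigma\<^sup>2)"
      by (rule sum_mono) (use int_n in auto)
    finally show "integral\<^sup>L M (Hf s) \<le> 2*(real n* sigma\<^sup>2) + 6*L\<^sup>2*(\<Sum>j<n. Ie s j) + 6*real n*zeta\<^sup>2 + 6*Sg s"
      by simp
  qed
  define c1 where "c1 = 3*C\<^sup>2*X0\<^sup>2/(1-q)\<^sup>2"
  define kap where "kap = eta\<^sup>2*C\<^sup>2/(1-q)\<^sup>2"
  have kap0: "0 \<le> kap" by (simp add: kap_def)
  define TT where "TT = (\<Sum>t<T. \<Sum>i<n. Ie t i)"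
  define Kc where "Kc = (\<Sum>t<T. avg n (\<lambda>i. Ie t i))"
  define S where "S = (\<Sum>t<T. Sg t)"
  have TTK: "TT = real n * Kc"
    unfolding TT_def Kc_def by (simp add: sum_distrib_left avg_real)
  have int1: "TT \<le> real n * c1 + real n * (3/2*kap) * (\<Sum>s<T. integral\<^sup>L M (Hf s))"
  proof -
    have "TT = (\<integral>\<omega>. (\<Sum>t<T. \<Sum>i<n. (norm (avg n (\<lambda>j. x t j \<omega>) - z t i \<omega>))\<^sup>2) \<partial>M)"
      unfolding TT_def Ie_def
      by (simp add: Bochner_Integration.integral_sum ie ise)
    also have "\<dots> \<le> (\<integral>\<omega>. real n * c1 + real n * (3/2*kap) * (\<Sum>s<T. Hf s \<omega>) \<partial>M)"
    proof (rule integral_mono_AE)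
      show "integrable M (\<lambda>\<omega>. \<Sum>t<T. \<Sum>i<n. (norm (avg n (\<lambda>j. x t j \<omega>) - z t i \<omega>))\<^sup>2)"
        by (rule Bochner_Integration.integrable_sum) (use ise in auto)
      show "integrable M (\<lambda>\<omega>. real n * c1 + real n * (3/2*kap) * (\<Sum>s<T. Hf s \<omega>))"
        by (intro Bochner_Integration.integrable_add integrable_mult_right integrable_const
              Bochner_Integration.integrable_sum iH)
      have eqk: "3/2*eta\<^sup>2*C\<^sup>2/(1-q)\<^sup>2 = 3/2*kap" by (simp add: kap_def)
      show "AE \<omega> in M. (\<Sum>t<T. \<Sum>i<n. (norm (avg n (\<lambda>j. x t j \<omega>) - z t i \<omega>))\<^sup>2)
          \<le> real n * c1 + real n * (3/2*kap) * (\<Sum>s<T. Hf s \<omega>)"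
        using pw unfolding eqk c1_def[symmetric] .
    qed
    also have "\<dots> = real n * c1 + real n * (3/2*kap) * (\<Sum>s<T. integral\<^sup>L M (Hf s))"
      apply (subst Bochner_Integration.integral_add)
        apply (intro integrable_const)
       apply (intro integrable_mult_right Bochner_Integration.integrable_sum iH)
      apply (simp add: Bochner_Integration.integral_sum iH prob_space)
      done
    finally show ?thesis .
  qed
  have int2: "(\<Sum>s<T. integral\<^sup>L M (Hf s)) \<le> 2*real n* sigma\<^sup>2*T + 6*L\<^sup>2*TT + 6*real n*zeta\<^sup>2*T + 6*S"
  proof -
    have "(\<Sum>s<T. integral\<^sup>L M (Hf s)) \<le> (\<Sum>s<T. 2*(real n* sigma\<^sup>2) + 6*L\<^sup>2*(\<Sum>j<n. Ie s j) + 6*real n*zeta\<^sup>2 + 6*Sg s)"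
      by (rule sum_mono) (rule intH)
    also have "\<dots> = 2*real n* sigma\<^sup>2*T + 6*L\<^sup>2*TT + 6*real n*zeta\<^sup>2*T + 6*S"
      unfolding TT_def S_def by (simp add: sum.distrib sum_distrib_left)
    finally show ?thesis .
  qed
  have int3: "TT \<le> real n*c1 + real n*(3/2*kap)*(2*real n* sigma\<^sup>2*T + 6*L\<^sup>2*TT + 6*real n*zeta\<^sup>2*T + 6*S)"
  proof -
    have "real n * (3/2*kap) * (\<Sum>s<T. integral\<^sup>L M (Hf s)) \<le> real n*(3/2*kap)*(2*real n* sigma\<^sup>2*T + 6*L\<^sup>2*TT + 6*real n*zeta\<^sup>2*T + 6*S)"
      by (rule mult_left_mono[OF int2]) (use kap0 in simp)
    then show ?thesis using int1 by linarith
  qed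
  have Pk: "P = 1 - 9*kap*L\<^sup>2*real n" unfolding P_def kap_def by (simp add: field_simps)
  have PK: "P * Kc \<le> c1 + 3*kap*real n* sigma\<^sup>2*real T + 9*kap*real n*zeta\<^sup>2*real T + 9*kap*S"
    by (rule mid_alg[OF n0 TTK int3 Pk])
  have S2: "0 \<le> (\<Sum>t<T. \<integral>\<omega>. (norm (avg n (\<lambda>i. gradF i (z t i \<omega>))))\<^sup>2 \<partial>M)"
    by (intro sum_nonneg integral_nonneg) auto
  have Leta: "L * eta \<le> 1" using eta_le Lpos by (simp add: field_simps)
  have SK: "S \<le> 2*(avg n (\<lambda>i. F i (avg n x0)) - fstar)/eta + L*eta* sigma\<^sup>2*real T/real n + L\<^sup>2*Kc"
    by (rule sk_alg[OF eta_pos Leta S2 n0]) (use cumulative in \<open>simp add: S_def Sg_def Kc_def Ie_def\<close>)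
  show ?thesis
    using final_alg[OF P_pos q1 eta_pos n0 PK[unfolded c1_def kap_def] SK] by (simp add: S_def Sg_def)
qed

end
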